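(* Let $\mathbf{A}$ be a 4-dimensional cyclic Leibniz algebra over $\mathbb{C}$. Then $\mathbf{A}$ is isomorphic to a Leibniz algebra with basis $\{a,a^2,a^3,a^4\}$, where $aa^i=a^{i+1}$ for $1\le i\le 3$, $a^iv=0$ for $i\ge2$ and all $v$, and $aa^4$ is given by one and only one of the following: (1) $aa^4=0$; (2) $aa^4=a^4$; (3) $aa^4=a^3+\alpha_4a^4$ with $\alpha_4\in\mathbb{C}/\sim$, where $\alpha\sim\alpha'$ iff $\alpha'=\pm\alpha$; (4) $aa^4=a^2+\alpha_3a^3+\alpha_4a^4$ with $(\alpha_3,\alpha_4)\in\mathbb{C}^2/\sim$, where $(\alpha,\beta)\sim(\alpha',\beta')$ iff $(\alpha',\beta')\in\{(\alpha,\beta),(\omega^2\alpha,\omega\beta),(\omega\alpha,\omega^2\beta)\}$ with $\omega=e^{2\pi i/3}$. Here "one and only one" means that algebras from different cases are non-isomorphic, and within case (3) (resp. (4)) two parameter values give isomorphic algebras iff they are equivalent under the stated relation $\sim$.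
   Context: A (left) Leibniz algebra is a vector space with a bilinear product such that $x(yz)=(xy)z+y(xz)$ for all $x,y,z$. A cyclic Leibniz algebra is a Leibniz algebra generated by a single element. For an element $x$ set $x^1=x$ and $x^{j+1}=x\,x^j$. *)

theory Defs
  imports "HOL-Analysis.Analysis"
begin

definition is_algebra :: "(complex \<Rightarrow> 'v::ab_group_add \<Rightarrow> 'v) \<Rightarrow> ('v \<Rightarrow> 'v \<Rightarrow> 'v) \<Rightarrow> bool" where
  "is_algebra smul m \<longleftrightarrow> vector_space smul
     \<and> (\<forall>x. Vector_Spaces.linear smul smul (m x))
     \<and> (\<forall>y. Vector_Spaces.linear smul smul (\<lambda>x. m x y))"

definition leibniz :: "('v::ab_group_add \<Rightarrow> 'v \<Rightarrow> 'v) \<Rightarrow> bool" where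
  "leibniz m \<longleftrightarrow> (\<forall>x y z. m x (m y z) = m (m x y) z + m y (m x z))"

definition subalgebra :: "(complex \<Rightarrow> 'v::ab_group_add \<Rightarrow> 'v) \<Rightarrow> ('v \<Rightarrow> 'v \<Rightarrow> 'v) \<Rightarrow> 'v set \<Rightarrow> bool" where
  "subalgebra smul m S \<longleftrightarrow> module.subspace smul S \<and> (\<forall>x\<in>S. \<forall>y\<in>S. m x y \<in> S)"

definition cyclic :: "(complex \<Rightarrow> 'v::ab_group_add \<Rightarrow> 'v) \<Rightarrow> ('v \<Rightarrow> 'v \<Rightarrow> 'v) \<Rightarrow> bool" where
  "cyclic smul m \<longleftrightarrow> (\<exists>a. \<forall>S. subalgebra smul m S \<and> a \<in> S \<longrightarrow> S = UNIV)"

definition alg_iso :: "(complex \<Rightarrow> 'v::ab_group_add \<Rightarrow> 'v) \<Rightarrow> ('v \<Rightarrow> 'v \<Rightarrow> 'v)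
   \<Rightarrow> (complex \<Rightarrow> 'w::ab_group_add \<Rightarrow> 'w) \<Rightarrow> ('w \<Rightarrow> 'w \<Rightarrow> 'w) \<Rightarrow> bool" where
  "alg_iso s1 m1 s2 m2 \<longleftrightarrow> (\<exists>f. Vector_Spaces.linear s1 s2 f \<and> bij f \<and>
       (\<forall>x y. f (m1 x y) = m2 (f x) (f y)))"

text \<open>Basis vectors e1,...,e4 of \<complex>^4; e_i plays the role of a^i.\<close>
definition e :: "4 \<Rightarrow> complex^4" where "e i = axis i 1"

text \<open>The model algebra on \<complex>^4 with basis a = e 1, a^2 = e 2, a^3 = e 3, a^4 = e 4,
  where a a^i = a^(i+1) for i \<le> 3, a^i v = 0 for i \<ge> 2, and a a^4 = c.\<close>
definition model :: "complex^4 \<Rightarrow> complex^4 \<Rightarrow> complex^4 \<Rightarrow> complex^4" where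
  "model c x y = (x$1) *s ((y$1) *s e 2 + (y$2) *s e 3 + (y$3) *s e 4 + (y$4) *s c)"

abbreviation (input) sc4 :: "complex \<Rightarrow> complex^4 \<Rightarrow> complex^4" where
  "sc4 \<equiv> (\<lambda>c x. c *s x)"

definition M1 :: "complex^4 \<Rightarrow> complex^4 \<Rightarrow> complex^4" where "M1 = model 0"
definition M2 :: "complex^4 \<Rightarrow> complex^4 \<Rightarrow> complex^4" where "M2 = model (e 4)"
definition M3 :: "complex \<Rightarrow> complex^4 \<Rightarrow> complex^4 \<Rightarrow> complex^4" where
  "M3 \<alpha>4 = model (e 3 + \<alpha>4 *s e 4)"
definition M4 :: "complex \<Rightarrow> complex \<Rightarrow> complex^4 \<Rightarrow> complex^4 \<Rightarrow> complex^4" where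
  "M4 \<alpha>3 \<alpha>4 = model (e 2 + \<alpha>3 *s e 3 + \<alpha>4 *s e 4)"

definition \<omega> :: complex where "\<omega> = exp (2 * pi * \<i> / 3)"

end

theory Submission
  imports Defs
begin


lemma e_comp[simp]: "e i $ j = (if j = i then 1 else 0)"
  by (simp add: e_def axis_def)

lemma model_comp[simp]:
  "model c x y $ 1 = x$1 * (y$4 * c$1)"
  "model c x y $ 2 = x$1 * (y$1 + y$4 * c$2)"
  "model c x y $ 3 = x$1 * (y$2 + y$4 * c$3)"
  "model c x y $ 4 = x$1 * (y$3 + y$4 * c$4)"
  by (simp_all add: model_def algebra_simps)

lemma lin4: "Vector_Spaces.linear sc4 sc4 f \<Longrightarrow> f (x+y) = f x + f y \<and> f (c *s x) = c *s f x"
  by (simp add: Vector_Spaces.linear_iff)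

lemma vec4_decomp: "(x::complex^4) = x$1 *s e 1 + x$2 *s e 2 + x$3 *s e 3 + x$4 *s e 4"
  by (simp add: vec_eq_iff forall_4)

lemma lin4_expand:
  assumes "Vector_Spaces.linear sc4 sc4 f"
  shows "f x = x$1 *s f (e 1) + x$2 *s f (e 2) + x$3 *s f (e 3) + x$4 *s f (e 4)"
proof -
  have "f x = f (x$1 *s e 1 + x$2 *s e 2 + x$3 *s e 3 + x$4 *s e 4)"
    using vec4_decomp[of x] by metis
  then show ?thesis using lin4[OF assms] by simp
qed

lemma CH:
  assumes "c$1 = 0"
  shows "model c (e 1) (model c (e 1) (model c (e 1) (model c (e 1) w))) =
    c$2 *s model c (e 1) w + c$3 *s model c (e 1) (model c (e 1) w) + c$4 *s model c (e 1) (model c (e 1) (model c (e 1) w))"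
  using assms by (simp add: vec_eq_iff forall_4 algebra_simps)

lemma iso_crit:
  assumes iso: "alg_iso sc4 (model c) sc4 (model c')" and c1: "c$1 = 0" and c1': "c'$1 = 0"
  shows "\<exists>s. s \<noteq> 0 \<and> c$2 = s^3 * c'$2 \<and> c$3 = s^2 * c'$3 \<and> c$4 = s * c'$4"
proof -
  obtain f where lin: "Vector_Spaces.linear sc4 sc4 f" and bij: "bij f"
    and hom: "\<And>x y. f (model c x y) = model c' (f x) (f y)"
    using iso unfolding alg_iso_def by blast
  note fl = lin4[OF lin]
  define L where "L w = model c' (e 1) w" for w
  have mL: "model c' x y = x$1 *s L y" for x y by (simp add: L_def vec_eq_iff forall_4)
  define u where "u = f (e 1)"
  define s where "s = u$1"
  have ee: "model c (e 1) (e 1) = e 2" "model c (e 1) (e 2) = e 3" "model c (e 1) (e 3) = e 4"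
    "model c (e 1) (e 4) = c"
    using c1 by (simp_all add: vec_eq_iff forall_4)
  have v2: "f (e 2) = s *s L u" using hom[of "e 1" "e 1"] ee mL u_def s_def by simp
  have v3: "f (e 3) = s *s L (f (e 2))" using hom[of "e 1" "e 2"] ee mL u_def s_def by simp
  have v4: "f (e 4) = s *s L (f (e 3))" using hom[of "e 1" "e 3"] ee mL u_def s_def by simp
  have vc: "f c = s *s L (f (e 4))" using hom[of "e 1" "e 4"] ee mL u_def s_def by simp
  have fc: "f c = c$2 *s f (e 2) + c$3 *s f (e 3) + c$4 *s f (e 4)"
    using lin4_expand[OF lin, of c] c1 by simp
  have f0: "f 0 = 0" using fl[of 0 0] by simp
  have inj: "x = 0" if "f x = 0" for x
    using bij f0 that unfolding bij_def inj_def by metis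
  have s0: "s \<noteq> 0"
  proof
    assume "s = 0"
    then have "f (e 2) = 0" using v2 by simp
    then have "e 2 = 0" by (rule inj)
    then have "e 2 $ 2 = (0::complex^4) $ 2" by simp
    then show False by simp
  qed
  have key: "s *s L (s *s L (s *s L (s *s L u))) =
     (s^3*c'$2) *s (s *s L u) + (s^2*c'$3) *s (s *s L (s *s L u))
     + (s*c'$4) *s (s *s L (s *s L (s *s L u)))"
    using c1' by (simp add: L_def vec_eq_iff forall_4 algebra_simps power2_eq_square power3_eq_cube)
  define X where "X = (c$2 - s^3*c'$2) *s e 2 + (c$3 - s^2*c'$3) *s e 3 + (c$4 - s*c'$4) *s e 4"
  have "f X = (c$2 - s^3*c'$2) *s f (e 2) + (c$3 - s^2*c'$3) *s f (e 3) + (c$4 - s*c'$4) *s f (e 4)"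
    using lin4_expand[OF lin, of X] by (simp add: X_def)
  also have "\<dots> = f c - ((s^3*c'$2) *s f (e 2) + (s^2*c'$3) *s f (e 3) + (s*c'$4) *s f (e 4))"
    unfolding fc by (simp add: vec_eq_iff algebra_simps)
  also have "\<dots> = 0" using key v2 v3 v4 vc by simp
  finally have "X = 0" by (rule inj)
  then have "X$2 = 0" "X$3 = 0" "X$4 = 0" by simp_all
  then show ?thesis using s0 by (intro exI[of _ s]) (simp add: X_def)
qed

lemma iso_diag:
  assumes t0: "t \<noteq> 0" and "c$1 = 0" "c'$1 = 0" "c$2 = t^3 * c'$2" "c$3 = t^2 * c'$3" "c$4 = t * c'$4"
  shows "alg_iso sc4 (model c) sc4 (model c')"
proof -
  define D where "D = (\<chi> i::4. if i = 1 then t else if i = 2 then t^2 else if i = 3 then t^3 else t^4)"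
  define f where "f x = (\<chi> i. D$i * x$i)" for x :: "complex^4"
  define g where "g x = (\<chi> i. x$i / D$i)" for x :: "complex^4"
  have D: "D$1 = t" "D$2 = t^2" "D$3 = t^3" "D$4 = t^4" by (simp_all add: D_def)
  have Dnz: "D$i \<noteq> 0" for i using t0 by (simp add: D_def)
  have lin: "Vector_Spaces.linear sc4 sc4 f"
    unfolding Vector_Spaces.linear_iff
    by (auto simp: f_def vec_eq_iff algebra_simps vec.vector_space_axioms)
  have "bij f"
    by (rule o_bij[of g]) (auto simp: f_def g_def fun_eq_iff vec_eq_iff Dnz)
  moreover have "f (model c x y) = model c' (f x) (f y)" for x y
    using assms by (simp add: f_def vec_eq_iff forall_4 D algebra_simps power2_eq_square power3_eq_cube
        power4_eq_xxxx)
  ultimately show ?thesis unfolding alg_iso_def using lin by blast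
qed

lemma omega_eq: "\<omega> = Complex (-1/2) (sqrt 3 / 2)"
proof -
  have "\<omega> = exp (\<i> * complex_of_real (2*pi/3))" unfolding \<omega>_def by (simp add: mult_ac)
  also have "\<dots> = cis (2*pi/3)" by (simp add: cis_conv_exp)
  also have "\<dots> = Complex (-1/2) (sqrt 3 / 2)" by (simp add: cis.ctr cos_120 sin_120)
  finally show ?thesis .
qed

lemma omega3: "\<omega>^3 = 1" and omega_sum: "\<omega>^2 + \<omega> + 1 = 0"
  by (simp_all add: omega_eq complex_eq_iff power2_eq_square power3_eq_cube field_simps)

lemma cube_roots: "(s::complex)^3 = 1 \<Longrightarrow> s = 1 \<or> s = \<omega> \<or> s = \<omega>^2"
proof -
  assume h: "s^3 = 1"
  have "(s - 1) * (s - \<omega>) * (s - \<omega>^2) = s^3 - (\<omega>^2 + \<omega> + 1) * s^2 + (\<omega>^2 + \<omega> + 1) * \<omega> * s - \<omega>^3"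
    by (simp add: algebra_simps power2_eq_square power3_eq_cube)
  also have "\<dots> = 0" using h omega3 omega_sum by simp
  finally show ?thesis by auto
qed

lemma M_defs:
  "M1 = model 0" "M2 = model (e 4)" "M3 a = model (e 3 + a *s e 4)"
  "M4 a b = model (e 2 + a *s e 3 + b *s e 4)"
  by (simp_all add: M1_def M2_def M3_def M4_def)

lemma part2:
  shows "\<not> alg_iso sc4 M1 sc4 M2
     \<and> (\<forall>\<alpha>4. \<not> alg_iso sc4 M1 sc4 (M3 \<alpha>4))
     \<and> (\<forall>\<alpha>3 \<alpha>4. \<not> alg_iso sc4 M1 sc4 (M4 \<alpha>3 \<alpha>4))
     \<and> (\<forall>\<alpha>4. \<not> alg_iso sc4 M2 sc4 (M3 \<alpha>4))
     \<and> (\<forall>\<alpha>3 \<alpha>4. \<not> alg_iso sc4 M2 sc4 (M4 \<alpha>3 \<alpha>4))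
     \<and> (\<forall>\<beta>4 \<alpha>3 \<alpha>4. \<not> alg_iso sc4 (M3 \<beta>4) sc4 (M4 \<alpha>3 \<alpha>4))
     \<and> (\<forall>\<alpha> \<alpha>'. alg_iso sc4 (M3 \<alpha>) sc4 (M3 \<alpha>') \<longleftrightarrow> \<alpha>' = \<alpha> \<or> \<alpha>' = - \<alpha>)
     \<and> (\<forall>\<alpha> \<beta> \<alpha>' \<beta>'. alg_iso sc4 (M4 \<alpha> \<beta>) sc4 (M4 \<alpha>' \<beta>') \<longleftrightarrow>
          (\<alpha>', \<beta>') \<in> {(\<alpha>, \<beta>), (\<omega>^2 * \<alpha>, \<omega> * \<beta>), (\<omega> * \<alpha>, \<omega>^2 * \<beta>)})"
proof (intro conjI allI)
  show "\<not> alg_iso sc4 M1 sc4 M2"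
    unfolding M_defs using iso_crit[of 0 "e 4"] by auto
  show "\<not> alg_iso sc4 M1 sc4 (M3 a)" for a
    unfolding M_defs using iso_crit[of 0 "e 3 + a *s e 4"] by auto
  show "\<not> alg_iso sc4 M1 sc4 (M4 a b)" for a b
    unfolding M_defs using iso_crit[of 0 "e 2 + a *s e 3 + b *s e 4"] by auto
  show "\<not> alg_iso sc4 M2 sc4 (M3 a)" for a
    unfolding M_defs using iso_crit[of "e 4" "e 3 + a *s e 4"] by auto
  show "\<not> alg_iso sc4 M2 sc4 (M4 a b)" for a b
    unfolding M_defs using iso_crit[of "e 4" "e 2 + a *s e 3 + b *s e 4"] by auto
  show "\<not> alg_iso sc4 (M3 c) sc4 (M4 a b)" for c a b
    unfolding M_defs using iso_crit[of "e 3 + c *s e 4" "e 2 + a *s e 3 + b *s e 4"] by auto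
  show "alg_iso sc4 (M3 a) sc4 (M3 a') \<longleftrightarrow> a' = a \<or> a' = - a" for a a'
  proof
    assume "alg_iso sc4 (M3 a) sc4 (M3 a')"
    then obtain s where "s \<noteq> 0" "1 = s^2" "a = s * a'"
      unfolding M_defs using iso_crit[of "e 3 + a *s e 4" "e 3 + a' *s e 4"] by auto
    moreover have "s = 1 \<or> s = -1" using \<open>1 = s^2\<close>
      by (metis power2_eq_1_iff)
    ultimately show "a' = a \<or> a' = - a" by auto
  next
    assume "a' = a \<or> a' = - a"
    then show "alg_iso sc4 (M3 a) sc4 (M3 a')"
    proof
      assume "a' = a" then show ?thesis
        unfolding M_defs by (intro iso_diag[of 1]) auto
    next
      assume "a' = - a" then show ?thesis
        unfolding M_defs by (intro iso_diag[of "-1"]) auto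
    qed
  qed
  show "alg_iso sc4 (M4 a b) sc4 (M4 a' b') \<longleftrightarrow>
          (a', b') \<in> {(a, b), (\<omega>^2 * a, \<omega> * b), (\<omega> * a, \<omega>^2 * b)}" for a b a' b'
  proof
    assume "alg_iso sc4 (M4 a b) sc4 (M4 a' b')"
    then obtain s where s: "s \<noteq> 0" "1 = s^3" "a = s^2 * a'" "b = s * b'"
      unfolding M_defs using iso_crit[of "e 2 + a *s e 3 + b *s e 4" "e 2 + a' *s e 3 + b' *s e 4"] by auto
    have w3: "\<omega>^3 = 1" by (rule omega3)
    have w4: "\<omega>^4 = \<omega>" proof -
      have "\<omega>^4 = \<omega>^3 * \<omega>" by (simp add: power3_eq_cube power4_eq_xxxx)
      then show ?thesis using w3 by simp
    qed
    from cube_roots s(2) have "s = 1 \<or> s = \<omega> \<or> s = \<omega>^2" by simp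
    then show "(a', b') \<in> {(a, b), (\<omega>^2 * a, \<omega> * b), (\<omega> * a, \<omega>^2 * b)}"
    proof (elim disjE)
      assume "s = 1" then show ?thesis using s by simp
    next
      assume h: "s = \<omega>"
      have "\<omega> * a = a'" using s(3) h w3 by (simp add: power3_eq_cube power2_eq_square mult.assoc[symmetric])
      moreover have "\<omega>^2 * b = b'" using s(4) h w3 by (simp add: power3_eq_cube power2_eq_square mult.assoc[symmetric])
      ultimately show ?thesis by auto
    next
      assume h: "s = \<omega>^2"
      have "\<omega>^2 * a = a'" using s(3) h w3 w4
        by (simp add: power3_eq_cube power2_eq_square mult.assoc[symmetric])
      moreover have "\<omega> * b = b'" using s(4) h w3 by (simp add: power3_eq_cube power2_eq_square mult.assoc[symmetric])
      ultimately show ?thesis by auto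
    qed
  next
    have w3: "\<omega>^3 = 1" by (rule omega3)
    have w0: "\<omega> \<noteq> 0" using w3 by auto
    assume "(a', b') \<in> {(a, b), (\<omega>^2 * a, \<omega> * b), (\<omega> * a, \<omega>^2 * b)}"
    then consider "a' = a" "b' = b" | "a' = \<omega>^2 * a" "b' = \<omega> * b" | "a' = \<omega> * a" "b' = \<omega>^2 * b"
      by auto
    then show "alg_iso sc4 (M4 a b) sc4 (M4 a' b')"
    proof cases
      case 1 then show ?thesis unfolding M_defs by (intro iso_diag[of 1]) auto
    next
      case 2
      have "(\<omega>^2)^3 = 1" "a = (\<omega>^2)^2 * (\<omega>^2 * a)" "b = \<omega>^2 * (\<omega> * b)"
        using w3 by (simp_all add: power3_eq_cube power2_eq_square algebra_simps)
      then show ?thesis using 2 w0 unfolding M_defs by (intro iso_diag[of "\<omega>^2"]) auto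
    next
      case 3
      have "a = \<omega>^2 * (\<omega> * a)" "b = \<omega> * (\<omega>^2 * b)"
        using w3 by (simp_all add: power3_eq_cube power2_eq_square algebra_simps)
      then show ?thesis using 3 w0 w3 unfolding M_defs by (intro iso_diag[of "\<omega>"]) auto
    qed
  qed
qed



lemma alg_iso_trans:
  "alg_iso s1 m1 s2 m2 \<Longrightarrow> alg_iso s2 m2 s3 m3 \<Longrightarrow> alg_iso s1 m1 s3 m3"
  unfolding alg_iso_def
  by (metis (no_types, lifting) Vector_Spaces.linear_compose bij_comp comp_apply)

lemma alg_iso_sym:
  assumes "alg_iso s1 m1 s2 m2" shows "alg_iso s2 m2 s1 m1"
proof -
  obtain f where lin: "Vector_Spaces.linear s1 s2 f" and b: "bij f"
    and h: "\<And>x y. f (m1 x y) = m2 (f x) (f y)"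
    using assms unfolding alg_iso_def by blast
  have fl: "vector_space s1" "vector_space s2" "\<And>x y. f (x + y) = f x + f y" "\<And>c x. f (s1 c x) = s2 c (f x)"
    using lin unfolding Vector_Spaces.linear_iff by auto
  define g where "g = inv f"
  have fg: "f (g x) = x" for x using b by (simp add: g_def bij_is_surj surj_f_inv_f)
  have inj: "x = y" if "f x = f y" for x y using b that by (meson bij_def inj_def)
  have "Vector_Spaces.linear s2 s1 g"
    unfolding Vector_Spaces.linear_iff
    using fl by (auto intro!: inj simp: fg)
  moreover have "bij g" using b by (simp add: g_def bij_imp_bij_inv)
  moreover have "g (m2 x y) = m1 (g x) (g y)" for x y
    by (rule inj) (simp add: h fg)
  ultimately show ?thesis unfolding alg_iso_def by blast
qed



lemma part1:
  fixes smul :: "complex \<Rightarrow> 'v::ab_group_add \<Rightarrow> 'v" and m :: "'v \<Rightarrow> 'v \<Rightarrow> 'v"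
  assumes alg: "is_algebra smul m" and lb: "leibniz m"
    and dim: "vector_space.dim smul (UNIV :: 'v set) = 4"
    and cyc: "cyclic smul m"
  shows "\<exists>c. c$1 = 0 \<and> alg_iso smul m sc4 (model c)"
proof -
  interpret V: vector_space smul using alg unfolding is_algebra_def by blast
  have mr: "m x (y + z) = m x y + m x z" "m x (smul k y) = smul k (m x y)" for x y z k
    using alg unfolding is_algebra_def Vector_Spaces.linear_iff by auto
  have ml: "m (x + y) z = m x z + m y z" "m (smul k x) z = smul k (m x z)" for x y z k
    using alg unfolding is_algebra_def Vector_Spaces.linear_iff by auto
  have mr0: "m x 0 = 0" for x using mr(2)[of x 0 0] by simp
  have ml0: "m 0 x = 0" for x using ml(2)[of 0 0 x] by simp
  have lbi: "m x (m y z) = m (m x y) z + m y (m x z)" for x y z using lb unfolding leibniz_def by blast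
  obtain a where ca: "\<And>S. subalgebra smul m S \<Longrightarrow> a \<in> S \<Longrightarrow> S = UNIV"
    using cyc unfolding cyclic_def by blast
  define p where "p k = (m a ^^ k) a" for k
  have pS: "p (Suc k) = m a (p k)" for k by (simp add: p_def)
  have p0: "p 0 = a" by (simp add: p_def)
  have ann: "m (p (Suc k)) z = 0" for k z
  proof (induction k arbitrary: z)
    case 0
    have "m a (m a z) = m (m a a) z + m a (m a z)" by (rule lbi)
    then show ?case by (simp add: pS p0)
  next
    case (Suc k)
    have "m a (m (p (Suc k)) z) = m (m a (p (Suc k))) z + m (p (Suc k)) (m a z)" by (rule lbi)
    then show ?case using Suc by (simp add: pS mr0)
  qed
  define S where "S = V.span (range p)"
  have aS: "m a y \<in> S" if "y \<in> S" for y
    using that unfolding S_def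
  proof (induction rule: V.span_induct)
    case base show ?case
      unfolding V.subspace_def
      by (auto simp: mr mr0 V.span_zero V.span_add V.span_scale)
  next
    case (step x) then show ?case
      by (auto simp: pS[symmetric] intro!: V.span_base)
  qed
  have clos: "\<forall>y\<in>S. m x y \<in> S" if "x \<in> S" for x
    using that unfolding S_def
  proof (induction rule: V.span_induct)
    case base show ?case
      unfolding V.subspace_def
      by (auto simp: ml ml0 V.span_zero V.span_add V.span_scale S_def)
  next
    case (step x)
    then obtain k where k: "x = p k" by auto
    show ?case
    proof (cases k)
      case 0 then show ?thesis using aS k p0 by (simp add: S_def)
    next
      case (Suc j) then show ?thesis using k ann by (simp add: V.span_zero)
    qed
  qed
  have "subalgebra smul m S" unfolding subalgebra_def using clos by (simp add: S_def)
  moreover have "a \<in> S" unfolding S_def by (rule V.span_base) (metis p0 rangeI)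
  ultimately have SU: "S = UNIV" by (rule ca)
  define W where "W n = V.span (p ` {..<n})" for n
  have full: "W n = UNIV" if pn: "p n \<in> W n" for n
  proof -
    have cl: "m a y \<in> W n" if "y \<in> W n" for y
      using that unfolding W_def
    proof (induction rule: V.span_induct)
      case base show ?case
        unfolding V.subspace_def
        by (auto simp: mr mr0 V.span_zero V.span_add V.span_scale)
    next
      case (step x)
      then obtain k where k: "k < n" "x = p k" by auto
      show ?case
      proof (cases "Suc k = n")
        case True then show ?thesis using pn k by (simp add: pS[symmetric] W_def)
      next
        case False then show ?thesis using k by (auto simp: pS[symmetric] intro!: V.span_base)
      qed
    qed
    have "p j \<in> W n" for j
    proof (induction j)
      case 0 show ?case
      proof (cases n)
        case 0 then show ?thesis using pn by simp
      next
        case (Suc n') then show ?thesis unfolding W_def by (auto intro!: V.span_base)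
      qed
    next
      case (Suc j) then show ?case using cl pS by simp
    qed
    then have "range p \<subseteq> W n" by auto
    then have "S \<subseteq> W n" unfolding S_def W_def by (simp add: V.span_minimal)
    then show ?thesis using SU by auto
  qed
  have notin: "p n \<notin> W n" if "n < 4" for n
  proof
    assume "p n \<in> W n"
    then have "UNIV \<subseteq> V.span (p ` {..<n})" using full W_def by auto
    then have "V.dim (UNIV::'v set) \<le> card (p ` {..<n})" by (intro V.dim_le_card) auto
    also have "\<dots> \<le> n" using card_image_le[of "{..<n}" p] by simp
    finally show False using dim that by simp
  qed
  obtain B where B: "V.independent B" "UNIV \<subseteq> V.span B" "card B = 4"
    using V.basis_exists[of UNIV] dim by auto
  have finB: "finite B" using B(3) by (metis card.infinite zero_neq_numeral)
  have indep: "V.independent (p ` {..<n}) \<and> card (p ` {..<n}) = n"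
    if "\<And>j. j < n \<Longrightarrow> p j \<notin> W j" for n
    using that
  proof (induction n)
    case 0 then show ?case by (simp add: V.independent_empty)
  next
    case (Suc n)
    have IH: "V.independent (p ` {..<n}) \<and> card (p ` {..<n}) = n" using Suc by auto
    have nn: "p n \<notin> W n" using Suc by auto
    have ni: "p n \<notin> p ` {..<n}" using nn unfolding W_def by (meson V.span_base)
    have eq: "p ` {..<Suc n} = insert (p n) (p ` {..<n})" by (simp add: lessThan_Suc)
    show ?case unfolding eq using IH nn ni
      by (simp add: V.independent_insertI W_def)
  qed
  have p4: "p 4 \<in> W 4"
  proof (rule ccontr)
    assume h: "p 4 \<notin> W 4"
    have i5: "V.independent (p ` {..<5}) \<and> card (p ` {..<5}) = 5"
    proof (rule indep)
      fix j :: nat assume "j < 5"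
      then show "p j \<notin> W j" using notin h by (cases "j = 4") auto
    qed
    then have "card (p ` {..<5}) \<le> card B"
      using V.independent_span_bound[OF finB, of "p ` {..<5}"] B by auto
    then show False using B i5 by simp
  qed
  have ind4: "V.independent (p ` {..<4}) \<and> card (p ` {..<4}) = 4"
    by (rule indep) (use notin in auto)
  have set4: "p ` {..<4} = {p 0, p 1, p 2, p 3}"
  proof -
    have "{..<4::nat} = {0,1,2,3}" by auto
    then show ?thesis by simp
  qed
  have W4: "W 4 = UNIV" using full p4 by blast
  have span4: "\<exists>k0 k1 k2 k3. x = smul k0 (p 0) + smul k1 (p 1) + smul k2 (p 2) + smul k3 (p 3)" for x
  proof -
    have "x \<in> V.span {p 0, p 1, p 2, p 3}" using W4 set4 W_def by auto
    then obtain k0 where "x - smul k0 (p 0) \<in> V.span {p 1, p 2, p 3}"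
      unfolding V.span_insert[of "p 0"] by blast
    then obtain k1 where "x - smul k0 (p 0) - smul k1 (p 1) \<in> V.span {p 2, p 3}"
      unfolding V.span_insert[of "p 1"] by blast
    then obtain k2 where "x - smul k0 (p 0) - smul k1 (p 1) - smul k2 (p 2) \<in> V.span {p 3}"
      unfolding V.span_insert[of "p 2"] by blast
    then obtain k3 where "x - smul k0 (p 0) - smul k1 (p 1) - smul k2 (p 2) - smul k3 (p 3) \<in> V.span {}"
      unfolding V.span_insert[of "p 3"] by blast
    then have "x - smul k0 (p 0) - smul k1 (p 1) - smul k2 (p 2) - smul k3 (p 3) = 0" by simp
    then have "x = smul k0 (p 0) + smul k1 (p 1) + smul k2 (p 2) + smul k3 (p 3)"
      by (simp add: diff_diff_eq add.assoc)
    then show ?thesis by blast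
  qed
  obtain b0 b1 b2 b3 where pb: "p 4 = smul b0 (p 0) + smul b1 (p 1) + smul b2 (p 2) + smul b3 (p 3)"
    using span4 by blast
  have pin: "p j \<in> W n" if "j < n" for j n using that unfolding W_def by (auto intro!: V.span_base)
  have pne: "p n \<noteq> p j" if "j < n" "n < 4" for j n using pin notin that by metis
  have pnz: "p n \<noteq> 0" if "n < 4" for n using notin[OF that] unfolding W_def using V.span_zero by metis
  have dist: "p 1 \<noteq> p 0" "p 2 \<noteq> p 0" "p 3 \<noteq> p 0" "p 2 \<noteq> p 1" "p 3 \<noteq> p 1" "p 3 \<noteq> p 2"
    using pne by auto
  have dist': "p 0 \<noteq> p 1" "p 0 \<noteq> p 2" "p 0 \<noteq> p 3" "p 1 \<noteq> p 2" "p 1 \<noteq> p 3" "p 2 \<noteq> p 3"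
    using dist by metis+
  have indep4: "k0 = 0 \<and> k1 = 0 \<and> k2 = 0 \<and> k3 = 0"
    if "smul k0 (p 0) + smul k1 (p 1) + smul k2 (p 2) + smul k3 (p 3) = 0" for k0 k1 k2 k3
  proof -
    define u where "u v = (if v = p 0 then k0 else if v = p 1 then k1 else if v = p 2 then k2 else k3)" for v
    have su: "(\<Sum>v\<in>{p 0, p 1, p 2, p 3}. smul (u v) v) = 0"
      using that dist dist' by (simp add: u_def add.assoc)
    have uz: "u v = 0" if "v \<in> {p 0, p 1, p 2, p 3}" for v
      by (rule V.independentD[OF _ _ _ su that]) (use ind4 set4 in auto)
    have "u (p 0) = 0" "u (p 1) = 0" "u (p 2) = 0" "u (p 3) = 0" by (rule uz; simp)+
    then show ?thesis using dist dist' unfolding u_def by simp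
  qed
  have ann1: "m (p 1) z = 0" "m (p 2) z = 0" "m (p 3) z = 0" "m (p 4) z = 0" for z
    using ann[of 0 z] ann[of 1 z] ann[of 2 z] ann[of 3 z] by (simp_all add: numeral_eq_Suc)
  have annS: "m (p (Suc 0)) z = 0" for z using ann[of 0] .
  have pp: "m (p 0) (p 0) = p 1" "m (p 0) (p 1) = p 2" "m (p 0) (p 2) = p 3" "m (p 0) (p 3) = p 4"
    using pS[of 0] pS[of 1] pS[of 2] pS[of 3] p0 by (simp_all add: numeral_eq_Suc)
  have ppS: "m (p 0) (p (Suc 0)) = p 2" using pp(2) by simp
  have "m (p 4) (p 0) = smul b0 (p 1)"
    unfolding pb by (simp add: ml ann1 annS pp)
  then have "smul b0 (p 1) = 0" using ann1 by simp
  then have b0: "b0 = 0" using pnz[of 1] by simp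
  define c :: "complex^4" where "c = (\<chi> i. if i = 1 then 0 else if i = 2 then b1 else if i = 3 then b2 else b3)"
  have cc: "c$1 = 0" "c$2 = b1" "c$3 = b2" "c$4 = b3" by (simp_all add: c_def)
  define g where "g x = smul (x$1) (p 0) + smul (x$2) (p 1) + smul (x$3) (p 2) + smul (x$4) (p 3)" for x :: "complex^4"
  have vs: "vector_space smul" using alg unfolding is_algebra_def by blast
  have lin: "Vector_Spaces.linear sc4 smul g"
    unfolding Vector_Spaces.linear_iff
    using vs by (simp add: vec.vector_space_axioms g_def V.scale_left_distrib V.scale_right_distrib add_ac)
  have gdiff: "g x - g y = g (x - y)" for x y
    by (simp add: g_def V.scale_left_diff_distrib algebra_simps)
  have "inj g"
  proof (rule injI)
    fix x y assume "g x = g y"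
    then have "g (x - y) = 0" using gdiff by (metis diff_self)
    then have "(x - y)$1 = 0 \<and> (x - y)$2 = 0 \<and> (x - y)$3 = 0 \<and> (x - y)$4 = 0"
      unfolding g_def by (rule indep4)
    then show "x = y" by (simp add: vec_eq_iff forall_4)
  qed
  moreover have "surj g"
  proof -
    have "v \<in> range g" for v
    proof -
      obtain k0 k1 k2 k3 where k: "v = smul k0 (p 0) + smul k1 (p 1) + smul k2 (p 2) + smul k3 (p 3)"
        using span4 by blast
      define x :: "complex^4" where "x = (\<chi> i. if i = 1 then k0 else if i = 2 then k1 else if i = 3 then k2 else k3)"
      have "g x = v" by (simp add: g_def x_def k)
      then show ?thesis by blast
    qed
    then show ?thesis by auto
  qed
  ultimately have bg: "bij g" by (simp add: bij_def)
  have hom: "g (model c x y) = m (g x) (g y)" for x y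
  proof -
    have "m (g x) (g y) = smul (x$1) (m (p 0) (g y))"
      by (simp add: g_def ml ann1 annS)
    also have "m (p 0) (g y) = smul (y$1) (p 1) + smul (y$2) (p 2) + smul (y$3) (p 3) + smul (y$4) (p 4)"
      by (simp add: g_def mr pp ppS)
    finally show ?thesis
      by (simp add: g_def cc pb b0 algebra_simps)
  qed
  have "alg_iso sc4 (model c) smul m"
    unfolding alg_iso_def using lin bg hom by blast
  then show ?thesis using alg_iso_sym cc(1) by blast
qed


theorem corollary4p2:
  fixes smul :: "complex \<Rightarrow> 'v::ab_group_add \<Rightarrow> 'v" and m :: "'v \<Rightarrow> 'v \<Rightarrow> 'v"
  assumes "is_algebra smul m" and "leibniz m"
    and "vector_space.dim smul (UNIV :: 'v set) = 4"
    and "cyclic smul m"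
  shows "(alg_iso smul m sc4 M1 \<or> alg_iso smul m sc4 M2
          \<or> (\<exists>\<alpha>4. alg_iso smul m sc4 (M3 \<alpha>4))
          \<or> (\<exists>\<alpha>3 \<alpha>4. alg_iso smul m sc4 (M4 \<alpha>3 \<alpha>4)))
     \<and> \<not> alg_iso sc4 M1 sc4 M2
     \<and> (\<forall>\<alpha>4. \<not> alg_iso sc4 M1 sc4 (M3 \<alpha>4))
     \<and> (\<forall>\<alpha>3 \<alpha>4. \<not> alg_iso sc4 M1 sc4 (M4 \<alpha>3 \<alpha>4))
     \<and> (\<forall>\<alpha>4. \<not> alg_iso sc4 M2 sc4 (M3 \<alpha>4))
     \<and> (\<forall>\<alpha>3 \<alpha>4. \<not> alg_iso sc4 M2 sc4 (M4 \<alpha>3 \<alpha>4))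
     \<and> (\<forall>\<beta>4 \<alpha>3 \<alpha>4. \<not> alg_iso sc4 (M3 \<beta>4) sc4 (M4 \<alpha>3 \<alpha>4))
     \<and> (\<forall>\<alpha> \<alpha>'. alg_iso sc4 (M3 \<alpha>) sc4 (M3 \<alpha>') \<longleftrightarrow> \<alpha>' = \<alpha> \<or> \<alpha>' = - \<alpha>)
     \<and> (\<forall>\<alpha> \<beta> \<alpha>' \<beta>'. alg_iso sc4 (M4 \<alpha> \<beta>) sc4 (M4 \<alpha>' \<beta>') \<longleftrightarrow>
          (\<alpha>', \<beta>') \<in> {(\<alpha>, \<beta>), (\<omega>^2 * \<alpha>, \<omega> * \<beta>), (\<omega> * \<alpha>, \<omega>^2 * \<beta>)})"
proof -
  obtain c where c1: "c$1 = 0" and iso: "alg_iso smul m sc4 (model c)"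
    using part1[OF assms] by blast
  have "alg_iso smul m sc4 M1 \<or> alg_iso smul m sc4 M2
          \<or> (\<exists>\<alpha>4. alg_iso smul m sc4 (M3 \<alpha>4))
          \<or> (\<exists>\<alpha>3 \<alpha>4. alg_iso smul m sc4 (M4 \<alpha>3 \<alpha>4))"
  proof (cases "c$2 = 0")
    case False
    obtain t where t: "c$2 = t^3" using exists_complex_root[of 3 "c$2"] by auto
    have t0: "t \<noteq> 0" using t False by auto
    have "alg_iso sc4 (model c) sc4 (model (e 2 + (c$3 / t^2) *s e 3 + (c$4 / t) *s e 4))"
      by (rule iso_diag[OF t0]) (use c1 t t0 in simp_all)
    then have "alg_iso smul m sc4 (M4 (c$3 / t^2) (c$4 / t))"
      unfolding M_defs by (rule alg_iso_trans[OF iso])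
    then show ?thesis by blast
  next
    case c2: True
    show ?thesis
    proof (cases "c$3 = 0")
      case False
      obtain t where t: "c$3 = t^2" using exists_complex_root[of 2 "c$3"] by auto
      have t0: "t \<noteq> 0" using t False by auto
      have "alg_iso sc4 (model c) sc4 (model (e 3 + (c$4 / t) *s e 4))"
        by (rule iso_diag[OF t0]) (use c1 c2 t t0 in simp_all)
      then have "alg_iso smul m sc4 (M3 (c$4 / t))"
        unfolding M_defs by (rule alg_iso_trans[OF iso])
      then show ?thesis by blast
    next
      case c3: True
      show ?thesis
      proof (cases "c$4 = 0")
        case False
        have "alg_iso sc4 (model c) sc4 (model (e 4))"
          by (rule iso_diag[OF False]) (use c1 c2 c3 in simp_all)
        then have "alg_iso smul m sc4 M2"
          unfolding M_defs by (rule alg_iso_trans[OF iso])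
        then show ?thesis by blast
      next
        case True
        have "c = 0" using c1 c2 c3 True by (simp add: vec_eq_iff forall_4)
        then show ?thesis using iso unfolding M_defs by blast
      qed
    qed
  qed
  then show ?thesis using part2 by blast
qed

end
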